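(* The class of $\curlyvee$-algebras is a proper quasivariety: it is a quasivariety but not a variety (it is not closed under homomorphic images).
   Context: A left regular band is a set with a binary operation $\sqcup$ satisfying $a\sqcup(b\sqcup c)=(a\sqcup b)\sqcup c$, $a\sqcup a=a$, $a\sqcup b=(a\sqcup b)\sqcup a$. On an algebra with operation $\sqcup$ write $a\lesssim b$ iff $b\sqcup a=b$. A $\curlyvee$-algebra is an algebra $(S,\curlyvee)$ with one binary operation such that, defining $a\sqcup b=a\curlyvee(a\curlyvee b)$ for all $a,b\in S$: $(S,\sqcup)$ is a left regular band; $\curlyvee$ is commutative and idempotent; $(a\curlyvee b)\sqcup(a\sqcup b)=a\sqcup b$; $a\sqcup(b\curlyvee c)=(a\sqcup b)\curlyvee(a\sqcup c)$; and for all $a,b,c,d$, if $d\lesssim a$, $d\lesssim b$, $d\lesssim c$, $d\lesssim a\curlyvee b$ and $d\lesssim b\curlyvee c$ then $d\lesssim a\curlyvee c$. *)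

theory Defs
  imports Main
begin

definition closed_op :: "'a set \<Rightarrow> ('a \<Rightarrow> 'a \<Rightarrow> 'a) \<Rightarrow> bool" where
  "closed_op S j \<longleftrightarrow> (\<forall>a\<in>S. \<forall>b\<in>S. j a b \<in> S)"

definition sqc :: "('a \<Rightarrow> 'a \<Rightarrow> 'a) \<Rightarrow> 'a \<Rightarrow> 'a \<Rightarrow> 'a" where
  "sqc j a b = j a (j a b)"

definition lsim :: "('a \<Rightarrow> 'a \<Rightarrow> 'a) \<Rightarrow> 'a \<Rightarrow> 'a \<Rightarrow> bool" where
  "lsim j a b \<longleftrightarrow> sqc j b a = b"

definition left_regular_band :: "'a set \<Rightarrow> ('a \<Rightarrow> 'a \<Rightarrow> 'a) \<Rightarrow> bool" where
  "left_regular_band S p \<longleftrightarrow>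
     (\<forall>a\<in>S. \<forall>b\<in>S. \<forall>c\<in>S. p a (p b c) = p (p a b) c) \<and>
     (\<forall>a\<in>S. p a a = a) \<and>
     (\<forall>a\<in>S. \<forall>b\<in>S. p a b = p (p a b) a)"

definition vee_alg :: "'a set \<Rightarrow> ('a \<Rightarrow> 'a \<Rightarrow> 'a) \<Rightarrow> bool" where
  "vee_alg S j \<longleftrightarrow>
     closed_op S j \<and>
     left_regular_band S (sqc j) \<and>
     (\<forall>a\<in>S. \<forall>b\<in>S. j a b = j b a) \<and>
     (\<forall>a\<in>S. j a a = a) \<and>
     (\<forall>a\<in>S. \<forall>b\<in>S. sqc j (j a b) (sqc j a b) = sqc j a b) \<and>
     (\<forall>a\<in>S. \<forall>b\<in>S. \<forall>c\<in>S. sqc j a (j b c) = j (sqc j a b) (sqc j a c)) \<and>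
     (\<forall>a\<in>S. \<forall>b\<in>S. \<forall>c\<in>S. \<forall>d\<in>S.
        lsim j d a \<and> lsim j d b \<and> lsim j d c \<and> lsim j d (j a b) \<and> lsim j d (j b c)
        \<longrightarrow> lsim j d (j a c))"

definition is_hom :: "'a set \<Rightarrow> ('a \<Rightarrow> 'a \<Rightarrow> 'a) \<Rightarrow> 'b set \<Rightarrow> ('b \<Rightarrow> 'b \<Rightarrow> 'b) \<Rightarrow> ('a \<Rightarrow> 'b) \<Rightarrow> bool" where
  "is_hom S j T k h \<longleftrightarrow> (\<forall>a\<in>S. h a \<in> T) \<and> (\<forall>a\<in>S. \<forall>b\<in>S. h (j a b) = k (h a) (h b))"

definition rp_rel :: "('i \<Rightarrow> 'a set) \<Rightarrow> 'i filter \<Rightarrow> (('i \<Rightarrow> 'a) \<times> ('i \<Rightarrow> 'a)) set" where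
  "rp_rel A F = {(x, y). x \<in> {x. \<forall>i. x i \<in> A i} \<and> y \<in> {x. \<forall>i. x i \<in> A i} \<and> eventually (\<lambda>i. x i = y i) F}"

definition rp_carrier :: "('i \<Rightarrow> 'a set) \<Rightarrow> 'i filter \<Rightarrow> ('i \<Rightarrow> 'a) set set" where
  "rp_carrier A F = {x. \<forall>i. x i \<in> A i} // rp_rel A F"

definition rp_op :: "('i \<Rightarrow> 'a set) \<Rightarrow> ('i \<Rightarrow> 'a \<Rightarrow> 'a \<Rightarrow> 'a) \<Rightarrow> 'i filter
    \<Rightarrow> ('i \<Rightarrow> 'a) set \<Rightarrow> ('i \<Rightarrow> 'a) set \<Rightarrow> ('i \<Rightarrow> 'a) set" where
  "rp_op A f F X Y =
     rp_rel A F `` {\<lambda>i. f i ((SOME x. x \<in> X) i) ((SOME y. y \<in> Y) i)}"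

end

theory Submission
  imports Defs
begin


lemma sub_vee: assumes "vee_alg S j" "T \<subseteq> S" "closed_op T j" shows "vee_alg T j"
  using assms unfolding vee_alg_def left_regular_band_def
  apply (elim conjE)
  apply (intro conjI ballI impI)
  apply assumption
  by (blast dest: subsetD)+

lemma iso_vee:
  assumes V: "vee_alg S j" and H: "is_hom S j T k h" and B: "bij_betw h S T"
  shows "vee_alg T k"
proof -
  have inj: "inj_on h S" and im: "h ` S = T" using B unfolding bij_betw_def by auto
  have cj: "\<And>a b. a \<in> S \<Longrightarrow> b \<in> S \<Longrightarrow> j a b \<in> S" using V unfolding vee_alg_def closed_op_def by blast
  have cs: "\<And>a b. a \<in> S \<Longrightarrow> b \<in> S \<Longrightarrow> sqc j a b \<in> S" unfolding sqc_def using cj by blast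
  have hk: "\<And>a b. a \<in> S \<Longrightarrow> b \<in> S \<Longrightarrow> k (h a) (h b) = h (j a b)" using H unfolding is_hom_def by auto
  have hs: "\<And>a b. a \<in> S \<Longrightarrow> b \<in> S \<Longrightarrow> sqc k (h a) (h b) = h (sqc j a b)"
    unfolding sqc_def using hk cj by simp
  have heq: "\<And>a b. a \<in> S \<Longrightarrow> b \<in> S \<Longrightarrow> h a = h b \<longleftrightarrow> a = b" using inj by (meson inj_on_eq_iff)
  have hl: "\<And>a b. a \<in> S \<Longrightarrow> b \<in> S \<Longrightarrow> lsim k (h a) (h b) \<longleftrightarrow> lsim j a b"
    unfolding lsim_def using hs heq cs by simp
  have bq: "\<And>Q. (\<forall>x\<in>T. Q x) \<longleftrightarrow> (\<forall>x\<in>S. Q (h x))" unfolding im[symmetric] Ball_image_comp comp_def by (rule refl)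
  have VD: "closed_op S j \<and>
     left_regular_band S (sqc j) \<and>
     (\<forall>a\<in>S. \<forall>b\<in>S. j a b = j b a) \<and>
     (\<forall>a\<in>S. j a a = a) \<and>
     (\<forall>a\<in>S. \<forall>b\<in>S. sqc j (j a b) (sqc j a b) = sqc j a b) \<and>
     (\<forall>a\<in>S. \<forall>b\<in>S. \<forall>c\<in>S. sqc j a (j b c) = j (sqc j a b) (sqc j a c)) \<and>
     (\<forall>a\<in>S. \<forall>b\<in>S. \<forall>c\<in>S. \<forall>d\<in>S.
        lsim j d a \<and> lsim j d b \<and> lsim j d c \<and> lsim j d (j a b) \<and> lsim j d (j b c)
        \<longrightarrow> lsim j d (j a c))" using V unfolding vee_alg_def by blast
  have hT: "\<And>x. x \<in> S \<Longrightarrow> h x \<in> T" unfolding im[symmetric] by (rule imageI)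
  show ?thesis
    unfolding vee_alg_def left_regular_band_def closed_op_def bq
    apply (intro conjI ballI impI)
    apply (simp_all only: hk hs hl cj cs hT)
    using VD unfolding left_regular_band_def closed_op_def
    apply -
    apply (elim conjE; rule arg_cong[where f=h]; blast)+
    by blast
qed


context
  fixes A :: "'i \<Rightarrow> 'a set" and f :: "'i \<Rightarrow> 'a \<Rightarrow> 'a \<Rightarrow> 'a" and F :: "'i filter"
  assumes cl: "\<And>i. closed_op (A i) (f i)"
begin

abbreviation "PP \<equiv> {x. \<forall>i. x i \<in> A i}"
abbreviation "cls x \<equiv> rp_rel A F `` {x}"
abbreviation "fp x y \<equiv> (\<lambda>i. f i (x i) (y i))"

lemma rp_equiv: "equiv PP (rp_rel A F)"
  unfolding equiv_def refl_on_def sym_def trans_def rp_rel_def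
  apply (intro conjI)
     apply blast
    apply auto[1]
   apply (auto elim: eventually_mono)[1]
  apply clarsimp
  apply (erule (1) eventually_elim2)
  by simp

lemma cls_eq: "x \<in> PP \<Longrightarrow> y \<in> PP \<Longrightarrow> cls x = cls y \<longleftrightarrow> eventually (\<lambda>i. x i = y i) F"
  using eq_equiv_class_iff[OF rp_equiv] unfolding rp_rel_def by auto

lemma fp_in: "x \<in> PP \<Longrightarrow> y \<in> PP \<Longrightarrow> fp x y \<in> PP"
  using cl unfolding closed_op_def by auto

lemma some_cls: assumes "x \<in> PP" shows "(SOME z. z \<in> cls x) \<in> PP \<and> eventually (\<lambda>i. (SOME z. z \<in> cls x) i = x i) F"
proof -
  have "x \<in> cls x" using equiv_class_self[OF rp_equiv assms] .
  hence "(SOME z. z \<in> cls x) \<in> cls x" by (rule someI[where P="\<lambda>z. z \<in> cls x"])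
  thus ?thesis unfolding rp_rel_def by (auto elim: eventually_mono)
qed

lemma op_cls: assumes "x \<in> PP" "y \<in> PP" shows "rp_op A f F (cls x) (cls y) = cls (fp x y)"
proof -
  define x' where "x' = (SOME z. z \<in> cls x)"
  define y' where "y' = (SOME z. z \<in> cls y)"
  have x': "x' \<in> PP" "eventually (\<lambda>i. x' i = x i) F" using some_cls[OF assms(1)] x'_def by auto
  have y': "y' \<in> PP" "eventually (\<lambda>i. y' i = y i) F" using some_cls[OF assms(2)] y'_def by auto
  have ev: "eventually (\<lambda>i. fp x' y' i = fp x y i) F"
    by (rule eventually_elim2[OF x'(2) y'(2)]) simp
  have e2: "cls (fp x' y') = cls (fp x y)" using cls_eq[OF fp_in[OF x'(1) y'(1)] fp_in[OF assms]] ev by simp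
  have "rp_op A f F (cls x) (cls y) = cls (fp x' y')" unfolding rp_op_def x'_def y'_def by (rule refl)
  with e2 show ?thesis by simp
qed

lemma sqc_cls: assumes "x \<in> PP" "y \<in> PP"
  shows "sqc (rp_op A f F) (cls x) (cls y) = cls (\<lambda>i. sqc (f i) (x i) (y i))"
proof -
  have "sqc (rp_op A f F) (cls x) (cls y) = rp_op A f F (cls x) (rp_op A f F (cls x) (cls y))"
    unfolding sqc_def by (rule refl)
  also have "\<dots> = rp_op A f F (cls x) (cls (fp x y))" by (simp only: op_cls[OF assms])
  also have "\<dots> = cls (fp x (fp x y))" by (rule op_cls[OF assms(1) fp_in[OF assms]])
  also have "fp x (fp x y) = (\<lambda>i. sqc (f i) (x i) (y i))" unfolding sqc_def by (rule refl)
  finally show ?thesis .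
qed

lemma sqc_in: assumes "x \<in> PP" "y \<in> PP" shows "(\<lambda>i. sqc (f i) (x i) (y i)) \<in> PP"
  using fp_in[OF assms(1) fp_in[OF assms]] unfolding sqc_def .

lemma lsim_cls: assumes "x \<in> PP" "y \<in> PP"
  shows "lsim (rp_op A f F) (cls x) (cls y) \<longleftrightarrow> eventually (\<lambda>i. lsim (f i) (x i) (y i)) F"
proof -
  have "lsim (rp_op A f F) (cls x) (cls y) \<longleftrightarrow> cls (\<lambda>i. sqc (f i) (y i) (x i)) = cls y"
    unfolding lsim_def sqc_cls[OF assms(2,1)] by (rule refl)
  also have "\<dots> \<longleftrightarrow> eventually (\<lambda>i. sqc (f i) (y i) (x i) = y i) F"
    by (rule cls_eq[OF sqc_in[OF assms(2,1)] assms(2)])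
  finally show ?thesis unfolding lsim_def .
qed

lemma ball_q: "(\<forall>X\<in>rp_carrier A F. Q X) \<longleftrightarrow> (\<forall>x\<in>PP. Q (cls x))"
  unfolding rp_carrier_def by (auto elim!: quotientE intro: quotientI)

lemma rp_vee: assumes VA: "\<And>i. vee_alg (A i) (f i)" shows "vee_alg (rp_carrier A F) (rp_op A f F)"
proof -
  note VD = VA[unfolded vee_alg_def left_regular_band_def]
  have ass: "\<And>i a b c. a \<in> A i \<Longrightarrow> b \<in> A i \<Longrightarrow> c \<in> A i \<Longrightarrow> sqc (f i) a (sqc (f i) b c) = sqc (f i) (sqc (f i) a b) c"
    using VD by blast
  have sid: "\<And>i a. a \<in> A i \<Longrightarrow> sqc (f i) a a = a" using VD by blast
  have lrb: "\<And>i a b. a \<in> A i \<Longrightarrow> b \<in> A i \<Longrightarrow> sqc (f i) a b = sqc (f i) (sqc (f i) a b) a" using VD by blast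
  have comm: "\<And>i a b. a \<in> A i \<Longrightarrow> b \<in> A i \<Longrightarrow> f i a b = f i b a" using VD by blast
  have idm: "\<And>i a. a \<in> A i \<Longrightarrow> f i a a = a" using VD by blast
  have ax5: "\<And>i a b. a \<in> A i \<Longrightarrow> b \<in> A i \<Longrightarrow> sqc (f i) (f i a b) (sqc (f i) a b) = sqc (f i) a b" using VD by blast
  have ax6: "\<And>i a b c. a \<in> A i \<Longrightarrow> b \<in> A i \<Longrightarrow> c \<in> A i \<Longrightarrow> sqc (f i) a (f i b c) = f i (sqc (f i) a b) (sqc (f i) a c)"
    using VD by blast
  have ax7: "\<And>i a b c d. a \<in> A i \<Longrightarrow> b \<in> A i \<Longrightarrow> c \<in> A i \<Longrightarrow> d \<in> A i \<Longrightarrow>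
        lsim (f i) d a \<Longrightarrow> lsim (f i) d b \<Longrightarrow> lsim (f i) d c \<Longrightarrow> lsim (f i) d (f i a b) \<Longrightarrow> lsim (f i) d (f i b c)
        \<Longrightarrow> lsim (f i) d (f i a c)"
    using VD by blast
  have mem: "\<And>x i. x \<in> PP \<Longrightarrow> x i \<in> A i" by simp
  show ?thesis
    unfolding vee_alg_def left_regular_band_def ball_q
  proof (intro conjI ballI)
    show "closed_op (rp_carrier A F) (rp_op A f F)"
      unfolding closed_op_def ball_q
    proof (intro ballI)
      fix x y assume m: "x \<in> PP" "y \<in> PP"
      show "rp_op A f F (cls x) (cls y) \<in> rp_carrier A F"
        unfolding op_cls[OF m] rp_carrier_def by (rule quotientI[OF fp_in[OF m]])
    qed
  next
    fix a b c assume m: "a \<in> PP" "b \<in> PP" "c \<in> PP"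
    show "sqc (rp_op A f F) (cls a) (sqc (rp_op A f F) (cls b) (cls c)) = sqc (rp_op A f F) (sqc (rp_op A f F) (cls a) (cls b)) (cls c)"
      apply (simp only: sqc_cls sqc_in m)
      apply (rule arg_cong[where f="\<lambda>x. cls x"], rule ext)
      by (rule ass; rule mem; fact)
  next
    fix a assume m: "a \<in> PP"
    show "sqc (rp_op A f F) (cls a) (cls a) = cls a"
      apply (simp only: sqc_cls sqc_in m)
      apply (rule arg_cong[where f="\<lambda>x. cls x"], rule ext)
      by (rule sid; rule mem; fact)
  next
    fix a b assume m: "a \<in> PP" "b \<in> PP"
    show "sqc (rp_op A f F) (cls a) (cls b) = sqc (rp_op A f F) (sqc (rp_op A f F) (cls a) (cls b)) (cls a)"
      apply (simp only: sqc_cls sqc_in m)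
      apply (rule arg_cong[where f="\<lambda>x. cls x"], rule ext)
      by (rule lrb; rule mem; fact)
  next
    fix a b assume m: "a \<in> PP" "b \<in> PP"
    show "rp_op A f F (cls a) (cls b) = rp_op A f F (cls b) (cls a)"
      apply (simp only: op_cls fp_in m)
      apply (rule arg_cong[where f="\<lambda>x. cls x"], rule ext)
      by (rule comm; rule mem; fact)
  next
    fix a assume m: "a \<in> PP"
    show "rp_op A f F (cls a) (cls a) = cls a"
      apply (simp only: op_cls fp_in m)
      apply (rule arg_cong[where f="\<lambda>x. cls x"], rule ext)
      by (rule idm; rule mem; fact)
  next
    fix a b assume m: "a \<in> PP" "b \<in> PP"
    show "sqc (rp_op A f F) (rp_op A f F (cls a) (cls b)) (sqc (rp_op A f F) (cls a) (cls b)) = sqc (rp_op A f F) (cls a) (cls b)"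
      apply (simp only: op_cls sqc_cls fp_in sqc_in m)
      apply (rule arg_cong[where f="\<lambda>x. cls x"], rule ext)
      by (rule ax5; rule mem; fact)
  next
    fix a b c assume m: "a \<in> PP" "b \<in> PP" "c \<in> PP"
    show "sqc (rp_op A f F) (cls a) (rp_op A f F (cls b) (cls c)) = rp_op A f F (sqc (rp_op A f F) (cls a) (cls b)) (sqc (rp_op A f F) (cls a) (cls c))"
      apply (simp only: op_cls sqc_cls fp_in sqc_in m)
      apply (rule arg_cong[where f="\<lambda>x. cls x"], rule ext)
      by (rule ax6; rule mem; fact)
  next
    fix a b c d assume m: "a \<in> PP" "b \<in> PP" "c \<in> PP" "d \<in> PP"
    show "lsim (rp_op A f F) (cls d) (cls a) \<and> lsim (rp_op A f F) (cls d) (cls b) \<and> lsim (rp_op A f F) (cls d) (cls c) \<and>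
        lsim (rp_op A f F) (cls d) (rp_op A f F (cls a) (cls b)) \<and> lsim (rp_op A f F) (cls d) (rp_op A f F (cls b) (cls c))
        \<longrightarrow> lsim (rp_op A f F) (cls d) (rp_op A f F (cls a) (cls c))"
    proof
      assume h: "lsim (rp_op A f F) (cls d) (cls a) \<and> lsim (rp_op A f F) (cls d) (cls b) \<and> lsim (rp_op A f F) (cls d) (cls c) \<and>
        lsim (rp_op A f F) (cls d) (rp_op A f F (cls a) (cls b)) \<and> lsim (rp_op A f F) (cls d) (rp_op A f F (cls b) (cls c))"
      have e1: "eventually (\<lambda>i. lsim (f i) (d i) (a i)) F" using h lsim_cls[OF m(4) m(1)] by blast
      have e2: "eventually (\<lambda>i. lsim (f i) (d i) (b i)) F" using h lsim_cls[OF m(4) m(2)] by blast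
      have e3: "eventually (\<lambda>i. lsim (f i) (d i) (c i)) F" using h lsim_cls[OF m(4) m(3)] by blast
      have e4: "eventually (\<lambda>i. lsim (f i) (d i) (fp a b i)) F"
        using h lsim_cls[OF m(4) fp_in[OF m(1,2)]] unfolding op_cls[OF m(1,2)] by blast
      have e5: "eventually (\<lambda>i. lsim (f i) (d i) (fp b c i)) F"
        using h lsim_cls[OF m(4) fp_in[OF m(2,3)]] unfolding op_cls[OF m(2,3)] by blast
      have "eventually (\<lambda>i. lsim (f i) (d i) (fp a c i)) F"
        using e1 e2 e3 e4 e5
        by eventually_elim (rule ax7[OF mem[OF m(1)] mem[OF m(2)] mem[OF m(3)] mem[OF m(4)]]; assumption)
      thus "lsim (rp_op A f F) (cls d) (rp_op A f F (cls a) (cls c))"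
        unfolding op_cls[OF m(1,3)] lsim_cls[OF m(4) fp_in[OF m(1,3)]] .
    qed
  qed
qed
end

datatype e6 = E0 | E1 | E2 | E3 | E4 | E5

fun je :: "e6 \<Rightarrow> e6 \<Rightarrow> e6" where
  "je E0 E0 = E0" |
  "je E0 E1 = E0" |
  "je E0 E2 = E1" |
  "je E0 E3 = E0" |
  "je E0 E4 = E0" |
  "je E0 E5 = E1" |
  "je E1 E0 = E0" |
  "je E1 E1 = E1" |
  "je E1 E2 = E2" |
  "je E1 E3 = E0" |
  "je E1 E4 = E1" |
  "je E1 E5 = E2" |
  "je E2 E0 = E1" |
  "je E2 E1 = E2" |
  "je E2 E2 = E2" |
  "je E2 E3 = E1" |
  "je E2 E4 = E2" |
  "je E2 E5 = E2" |
  "je E3 E0 = E0" |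
  "je E3 E1 = E0" |
  "je E3 E2 = E1" |
  "je E3 E3 = E3" |
  "je E3 E4 = E3" |
  "je E3 E5 = E4" |
  "je E4 E0 = E0" |
  "je E4 E1 = E1" |
  "je E4 E2 = E2" |
  "je E4 E3 = E3" |
  "je E4 E4 = E4" |
  "je E4 E5 = E5" |
  "je E5 E0 = E1" |
  "je E5 E1 = E2" |
  "je E5 E2 = E2" |
  "je E5 E3 = E4" |
  "je E5 E4 = E5" |
  "je E5 E5 = E5"

lemma all_e6: "(\<forall>x. P x) \<longleftrightarrow> P E0 \<and> P E1 \<and> P E2 \<and> P E3 \<and> P E4 \<and> P E5"
  by (metis e6.exhaust)

lemma je_vee: "vee_alg UNIV je"
  unfolding vee_alg_def left_regular_band_def closed_op_def lsim_def sqc_def ball_UNIV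
  by (simp only: all_e6) simp

fun enc :: "e6 \<Rightarrow> nat" where
  "enc E0 = 0" | "enc E1 = 1" | "enc E2 = 2" | "enc E3 = 3" | "enc E4 = 4" | "enc E5 = 5"

definition dec :: "nat \<Rightarrow> e6" where
  "dec n = (if n = 0 then E0 else if n = 1 then E1 else if n = 2 then E2 else if n = 3 then E3 else if n = 4 then E4 else E5)"

lemma dec_enc: "dec (enc x) = x" by (cases x) (simp_all add: dec_def)
lemma enc_lt: "enc x < 6" by (cases x) simp_all
lemma enc_dec: "n < 6 \<Longrightarrow> enc (dec n) = n"
  by (auto simp add: dec_def)

definition "jx a b = enc (je (dec a) (dec b))"

lemma jx_vee: "vee_alg {0..<6} jx"
proof (rule iso_vee[OF je_vee])
  show "is_hom UNIV je {0..<6} jx enc" unfolding is_hom_def jx_def by (simp add: dec_enc enc_lt)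
  show "bij_betw enc UNIV {0..<6}"
    unfolding bij_betw_def
  proof
    show "inj_on enc UNIV" by (metis dec_enc injI)
    show "range enc = {0..<6}"
    proof
      show "range enc \<subseteq> {0..<6}" using enc_lt by auto
      show "{0..<6} \<subseteq> range enc" using enc_dec by (metis atLeastLessThan_iff rangeI subsetI)
    qed
  qed
qed

fun q :: "e6 \<Rightarrow> nat" where
  "q E0 = 0" | "q E1 = 0" | "q E2 = 0" | "q E3 = 1" | "q E4 = 2" | "q E5 = 3"

definition r :: "nat \<Rightarrow> e6" where
  "r n = (if n = 0 then E0 else if n = 1 then E3 else if n = 2 then E4 else E5)"

definition "kx a b = q (je (r a) (r b))"
definition "hx a = q (dec a)"

lemma q_lt: "q x < 4" by (cases x) simp_all

lemma kx_closed: "closed_op {0..<4} kx" unfolding closed_op_def kx_def using q_lt by simp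

lemma kx_not: "\<not> vee_alg {0..<4} kx"
proof
  assume "vee_alg {0..<4} kx"
  hence ax: "\<forall>a\<in>{0..<4::nat}. \<forall>b\<in>{0..<4}. \<forall>c\<in>{0..<4}. \<forall>d\<in>{0..<4}.
        lsim kx d a \<and> lsim kx d b \<and> lsim kx d c \<and> lsim kx d (kx a b) \<and> lsim kx d (kx b c)
        \<longrightarrow> lsim kx d (kx a c)" unfolding vee_alg_def by blast
  have m: "0 \<in> {0..<4::nat}" "1 \<in> {0..<4::nat}" "3 \<in> {0..<4::nat}" by auto
  have "lsim kx 1 1 \<and> lsim kx 1 0 \<and> lsim kx 1 3 \<and> lsim kx 1 (kx 1 0) \<and> lsim kx 1 (kx 0 3) \<longrightarrow> lsim kx 1 (kx 1 3)"
    using ax m by blast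
  thus False unfolding lsim_def sqc_def kx_def r_def by simp
qed

lemma hx_hom: "is_hom {0..<6} jx {0..<4} kx hx"
  unfolding is_hom_def
proof (intro conjI ballI)
  fix a assume "a \<in> {0..<6::nat}" thus "hx a \<in> {0..<4}" unfolding hx_def using q_lt by simp
next
  fix a b assume "a \<in> {0..<6::nat}" "b \<in> {0..<6::nat}"
  then obtain x y where "a = enc x" "b = enc y" using enc_dec by (metis atLeastLessThan_iff)
  moreover have "q (je x y) = q (je (r (q x)) (r (q y)))" by (cases x; cases y) (simp_all add: r_def)
  ultimately show "hx (jx a b) = kx (hx a) (hx b)" unfolding hx_def jx_def kx_def by (simp add: dec_enc)
qed

lemma hx_img: "hx ` {0..<6} = {0..<4}"
proof
  show "hx ` {0..<6} \<subseteq> {0..<4}" unfolding hx_def using q_lt by auto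
  have "0 = hx 0" "1 = hx 3" "2 = hx 4" "3 = hx 5" unfolding hx_def dec_def by simp_all
  hence "{0,1,2,3} \<subseteq> hx ` {0..<6}" by auto
  moreover have "{0..<4::nat} = {0,1,2,3}" by auto
  ultimately show "{0..<4} \<subseteq> hx ` {0..<6}" by simp
qed

theorem theorem3p11:
  shows
    "(\<forall>(S :: 'a set) j (T :: 'b set) k h.
        vee_alg S j \<and> closed_op T k \<and> is_hom S j T k h \<and> bij_betw h S T
        \<longrightarrow> vee_alg T k)
   \<and> (\<forall>(S :: 'a set) j T. vee_alg S j \<and> T \<subseteq> S \<and> closed_op T j \<longrightarrow> vee_alg T j)
   \<and> (\<forall>(A :: 'i \<Rightarrow> 'a set) f (F :: 'i filter).
        (\<forall>i. vee_alg (A i) (f i)) \<longrightarrow> vee_alg (rp_carrier A F) (rp_op A f F))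
   \<and> (\<exists>(S :: nat set) j (T :: nat set) k h.
        vee_alg S j \<and> closed_op T k \<and> is_hom S j T k h \<and> h ` S = T \<and> \<not> vee_alg T k)"
proof (intro conjI allI impI)
  fix S :: "'a set" and j and T :: "'b set" and k h
  assume "vee_alg S j \<and> closed_op T k \<and> is_hom S j T k h \<and> bij_betw h S T"
  thus "vee_alg T k" using iso_vee by blast
next
  fix S :: "'a set" and j and T
  assume "vee_alg S j \<and> T \<subseteq> S \<and> closed_op T j"
  thus "vee_alg T j" using sub_vee by blast
next
  fix A :: "'i \<Rightarrow> 'a set" and f and F :: "'i filter"
  assume a: "\<forall>i. vee_alg (A i) (f i)"
  have c: "\<And>i. closed_op (A i) (f i)" using a unfolding vee_alg_def by blast
  show "vee_alg (rp_carrier A F) (rp_op A f F)"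
    by (rule rp_vee[OF c]) (use a in blast)
next
  show "\<exists>(S :: nat set) j (T :: nat set) k h.
        vee_alg S j \<and> closed_op T k \<and> is_hom S j T k h \<and> h ` S = T \<and> \<not> vee_alg T k"
    using jx_vee kx_closed hx_hom hx_img kx_not by blast
qed

end
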